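(* Let $G$ be a finite commutative transitive group with trivial center, and let $G_1,\dots,G_n$ be its maximal abelian subgroups, which cover $G$, with $n\geq3$. Set $$\rho(n)=1+(n-1)\prod_{i=1}^n|G_i|-\sum_{i=1}^n\prod_{j\neq i}|G_j|,\qquad \mathcal N_G=1+(n-1)|G|-\sum_{i=1}^n\frac{|G|}{|G_i|}.$$ Then $\rho(n)>\mathcal N_G$.
   Context: A group $G$ is commutative transitive (CT) if commutation is transitive on non-central elements: for all non-central $a,b,c\in G$, $[a,b]=[b,c]=1$ implies $[a,c]=1$. $\rho(n)$ is the rank of the free kernel of $G_1*\cdots*G_n\to G_1\times\cdots\times G_n$, and $\mathcal N_G$ is the rank of the free group $\pi_1(E(2,G))$ (with $E(2,G)$ the homotopy fibre of $B(2,G)\to BG$, where $B(2,G)$ is the geometric realization of the simplicial subspace of the bar construction of $G$ whose $k$-simplices are the pairwise commuting $k$-tuples $\mathrm{Hom}(\mathbb Z^k,G)\subseteq G^k$). *)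

theory Defs
  imports "HOL-Algebra.Algebra"
begin

definition group_center :: "('a, 'b) monoid_scheme \<Rightarrow> 'a set" where
  "group_center G = {z \<in> carrier G. \<forall>x \<in> carrier G. z \<otimes>\<^bsub>G\<^esub> x = x \<otimes>\<^bsub>G\<^esub> z}"

definition commutative_transitive :: "('a, 'b) monoid_scheme \<Rightarrow> bool" where
  "commutative_transitive G \<longleftrightarrow>
     (\<forall>a \<in> carrier G - group_center G. \<forall>b \<in> carrier G - group_center G.
      \<forall>c \<in> carrier G - group_center G.
        a \<otimes>\<^bsub>G\<^esub> b = b \<otimes>\<^bsub>G\<^esub> a \<longrightarrow> b \<otimes>\<^bsub>G\<^esub> c = c \<otimes>\<^bsub>G\<^esub> b \<longrightarrow>
        a \<otimes>\<^bsub>G\<^esub> c = c \<otimes>\<^bsub>G\<^esub> a)"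

definition abelian_subgroup :: "'a set \<Rightarrow> ('a, 'b) monoid_scheme \<Rightarrow> bool" where
  "abelian_subgroup H G \<longleftrightarrow> subgroup H G \<and>
     (\<forall>x \<in> H. \<forall>y \<in> H. x \<otimes>\<^bsub>G\<^esub> y = y \<otimes>\<^bsub>G\<^esub> x)"

definition maximal_abelian_subgroup :: "'a set \<Rightarrow> ('a, 'b) monoid_scheme \<Rightarrow> bool" where
  "maximal_abelian_subgroup H G \<longleftrightarrow> abelian_subgroup H G \<and>
     (\<forall>K. abelian_subgroup K G \<longrightarrow> H \<subseteq> K \<longrightarrow> K = H)"

end

theory Submission
  imports Defs
begin

lemma prod_gt:
  fixes a :: "nat \<Rightarrow> int"
  assumes "\<And>i. i<n \<Longrightarrow> a i \<ge> 2" "n \<ge> 2"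
  shows "(\<Prod>i<n. a i) > 1 + (\<Sum>i<n. a i - 1)"
  using assms(2,1)
proof (induction n rule: nat_induct_at_least)
  case base
  have "a 0 \<ge> 2" "a 1 \<ge> 2" using base by auto
  then have "(a 0 - 1) * (a 1 - 1) > 0" by simp
  then show ?case by (simp add: numeral_2_eq_2 algebra_simps)
next
  case (Suc m)
  have am': "\<And>i. i<m \<Longrightarrow> a i \<ge> 2" using Suc.prems by simp
  have "(\<Prod>i<m. a i) > 1 + (\<Sum>i<m. a i - 1)" using Suc.IH am' by blast
  then have IH: "(\<Prod>i<m. a i) \<ge> 2 + (\<Sum>i<m. a i - 1)" by linarith
  have am: "a m \<ge> 2" using Suc.prems by simp
  have S: "(\<Sum>i<m. a i - 1) \<ge> 0" proof (intro sum_nonneg)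
    fix x assume "x \<in> {..<m}"
    then have "a x \<ge> 2" using Suc.prems[of x] by simp
    then show "a x - 1 \<ge> 0" by simp
  qed
  have "(\<Prod>i<m. a i) * a m \<ge> (2 + (\<Sum>i<m. a i - 1)) * a m"
    using IH am by (intro mult_right_mono) auto
  moreover have "(2 + (\<Sum>i<m. a i - 1)) * a m \<ge> (2 + (\<Sum>i<m. a i - 1)) + a m"
  proof -
    have "(2 + (\<Sum>i<m. a i - 1)) * (a m - 1) \<ge> 2 * (a m - 1)"
      using S am by (intro mult_right_mono) auto
    then show ?thesis using am by (simp add: algebra_simps)
  qed
  ultimately show ?case by simp
qed

lemma arith:
  fixes a :: "nat \<Rightarrow> int" and N :: int
  assumes a2: "\<And>i. i<n \<Longrightarrow> a i \<ge> 2" and n3: "n \<ge> 3"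
    and N: "N = 1 + (\<Sum>i<n. a i - 1)" and dv: "\<And>i. i<n \<Longrightarrow> a i dvd N"
  shows "1 + (int n - 1) * (\<Prod>i<n. a i) - (\<Sum>i<n. \<Prod>j\<in>{..<n}-{i}. a j)
     > 1 + (int n - 1)*N - (\<Sum>i<n. N div a i)"
proof -
  define P where "P = (\<Prod>i<n. a i)"
  define D where "D = P - N"
  have D0: "D > 0" using prod_gt[of n a] a2 n3 N unfolding D_def P_def by auto
  define c where "c i = (\<Prod>j\<in>{..<n}-{i}. a j) - N div a i" for i
  have ac: "a i * c i = D" if "i < n" for i
  proof -
    have "P = a i * (\<Prod>j\<in>{..<n}-{i}. a j)" unfolding P_def
      using that by (simp add: prod.remove)
    moreover have "a i * (N div a i) = N" using dv[OF that] by simp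
    ultimately show ?thesis unfolding c_def D_def by (simp add: algebra_simps)
  qed
  have c2: "2 * c i \<le> D" if "i < n" for i
  proof -
    have p1: "0 < a i * c i" using ac[OF that] D0 by simp
    have p2: "0 < a i" using a2[OF that] by simp
    have "c i > 0" using zero_less_mult_pos[OF p1 p2] .
    then have "2 * c i \<le> a i * c i" using a2[OF that] mult_right_mono[of 2 "a i" "c i"] by simp
    then show ?thesis using ac[OF that] by simp
  qed
  have "2 * (\<Sum>i<n. c i) \<le> int n * D"
    using sum_mono[of "{..<n}" "\<lambda>i. 2 * c i" "\<lambda>_. D"] c2 by (simp add: sum_distrib_left)
  moreover have "(\<Sum>i<n. c i) = (\<Sum>i<n. \<Prod>j\<in>{..<n}-{i}. a j) - (\<Sum>i<n. N div a i)"
    unfolding c_def by (simp add: sum_subtractf)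
  moreover have "(int n - 2) * D > 0" using D0 n3 by (intro mult_pos_pos) auto
  then have "int n * D < 2 * ((int n - 1) * D)" by (simp add: algebra_simps)
  ultimately show ?thesis unfolding D_def P_def by (simp add: algebra_simps)
qed

lemma inv_comm_aux:
  fixes G (structure)
  assumes "group G" "g \<in> carrier G" "x \<in> carrier G" "g \<otimes>\<^bsub>G\<^esub> x = x \<otimes>\<^bsub>G\<^esub> g"
  shows "inv\<^bsub>G\<^esub> g \<otimes>\<^bsub>G\<^esub> x = x \<otimes>\<^bsub>G\<^esub> inv\<^bsub>G\<^esub> g"
proof -
  interpret group G by fact
  have "inv g \<otimes> x = inv g \<otimes> x \<otimes> (g \<otimes> inv g)" using assms by simp
  also have "\<dots> = inv g \<otimes> (x \<otimes> g) \<otimes> inv g" using assms by (simp add: m_assoc)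
  also have "\<dots> = inv g \<otimes> (g \<otimes> x) \<otimes> inv g" using assms by simp
  also have "\<dots> = (inv g \<otimes> g) \<otimes> x \<otimes> inv g" using assms(2,3) by (simp add: m_assoc[symmetric])
  also have "\<dots> = x \<otimes> inv g" using assms by simp
  finally show ?thesis .
qed

lemma centralizer_abelian:
  fixes G (structure)
  assumes grp: "group G" and ct: "commutative_transitive G"
    and ctr: "group_center G = {\<one>\<^bsub>G\<^esub>}"
    and x: "x \<in> carrier G" "x \<noteq> \<one>\<^bsub>G\<^esub>"
  shows "abelian_subgroup {g \<in> carrier G. g \<otimes>\<^bsub>G\<^esub> x = x \<otimes>\<^bsub>G\<^esub> g} G"
proof -
  interpret group G by fact
  let ?C = "{g \<in> carrier G. g \<otimes> x = x \<otimes> g}"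
  have "subgroup ?C G"
  proof (rule subgroupI)
    show "?C \<noteq> {}" using x by auto
    fix a assume "a \<in> ?C"
    then show "inv a \<in> ?C" using inv_comm_aux[OF grp, of a x] x by auto
  next
    fix a b assume "a \<in> ?C" "b \<in> ?C"
    then have a: "a \<in> carrier G" "a \<otimes> x = x \<otimes> a" and b: "b \<in> carrier G" "b \<otimes> x = x \<otimes> b" by auto
    have "a \<otimes> b \<otimes> x = a \<otimes> (x \<otimes> b)" using a b x by (simp add: m_assoc)
    also have "\<dots> = (x \<otimes> a) \<otimes> b" using a b x by (simp add: m_assoc[symmetric])
    also have "\<dots> = x \<otimes> (a \<otimes> b)" using a b x by (simp add: m_assoc)
    finally show "a \<otimes> b \<in> ?C" using a b by simp
  qed auto
  moreover have "u \<otimes> v = v \<otimes> u" if "u \<in> ?C" "v \<in> ?C" for u v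
  proof (cases "u = \<one> \<or> v = \<one>")
    case True then show ?thesis using that by auto
  next
    case False
    then have u: "u \<in> carrier G - group_center G" and v: "v \<in> carrier G - group_center G"
      and xx: "x \<in> carrier G - group_center G" using that x ctr by auto
    have cu: "u \<otimes> x = x \<otimes> u" using that(1) by simp
    have cv: "x \<otimes> v = v \<otimes> x" using that(2) by simp
    show ?thesis using ct[unfolded commutative_transitive_def, rule_format, OF u xx v cu cv] .
  qed
  ultimately show ?thesis unfolding abelian_subgroup_def by blast
qed

theorem lemma7p4:
  fixes G (structure) and Gs :: "nat \<Rightarrow> 'a set" and n :: nat
  assumes "group G"
    and "finite (carrier G)"
    and "commutative_transitive G"
    and "group_center G = {\<one>\<^bsub>G\<^esub>}"
    and "inj_on Gs {..<n}"
    and "Gs ` {..<n} = {H. maximal_abelian_subgroup H G}"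
    and "(\<Union>i<n. Gs i) = carrier G"
    and "n \<ge> 3"
  shows "1 + (int n - 1) * (\<Prod>i<n. int (card (Gs i)))
           - (\<Sum>i<n. \<Prod>j\<in>{..<n} - {i}. int (card (Gs j)))
         > 1 + (int n - 1) * int (card (carrier G))
           - (\<Sum>i<n. int (card (carrier G)) div int (card (Gs i)))"
proof -
  note grp = assms(1) and fin = assms(2) and ct = assms(3) and ctr = assms(4)
    and inj = assms(5) and img = assms(6) and cov = assms(7) and n3 = assms(8)
  interpret group G by fact
  have MA: "maximal_abelian_subgroup (Gs i) G" if "i < n" for i
    using img that by blast
  have sub: "subgroup (Gs i) G" if "i < n" for i
    using MA[OF that] unfolding maximal_abelian_subgroup_def abelian_subgroup_def by blast
  have finG: "finite (Gs i)" if "i < n" for i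
    using sub[OF that] fin by (meson finite_subset subgroup.subset)
  have one: "\<one> \<in> Gs i" if "i < n" for i using sub[OF that] by (simp add: subgroup.one_closed)
  have disj: "Gs i \<inter> Gs j = {\<one>}" if ij: "i < n" "j < n" "i \<noteq> j" for i j
  proof (rule ccontr)
    assume "Gs i \<inter> Gs j \<noteq> {\<one>}"
    then obtain x where xi: "x \<in> Gs i" and xj: "x \<in> Gs j" and x1: "x \<noteq> \<one>"
      using one[OF ij(1)] one[OF ij(2)] by blast
    have xc: "x \<in> carrier G" using xi sub[OF ij(1)] subgroup.subset by blast
    let ?C = "{g \<in> carrier G. g \<otimes> x = x \<otimes> g}"
    have AC: "abelian_subgroup ?C G" using centralizer_abelian[OF grp ct ctr xc x1] .
    have "Gs k \<subseteq> ?C" if "k < n" "x \<in> Gs k" for k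
      using MA[OF that(1)] that(2) subgroup.subset[OF sub[OF that(1)]]
      unfolding maximal_abelian_subgroup_def abelian_subgroup_def by blast
    then have "?C = Gs i" "?C = Gs j"
      using MA ij xi xj AC unfolding maximal_abelian_subgroup_def by blast+
    then have "Gs i = Gs j" by simp
    then show False using inj ij unfolding inj_on_def by blast
  qed
  have card2: "card (Gs i) \<ge> 2" if "i < n" for i
  proof (rule ccontr)
    assume "\<not> card (Gs i) \<ge> 2"
    then have "card (Gs i) \<le> 1" by simp
    then have "\<forall>a\<in>Gs i. \<forall>b\<in>Gs i. a = b" using card_le_Suc0_iff_eq[OF finG[OF that]] by simp
    then have Gi: "Gs i = {\<one>}" using one[OF that] by blast
    have "carrier G \<subseteq> {\<one>}"
    proof
      fix g assume g: "g \<in> carrier G"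
      let ?H = "generate G {g}"
      have "abelian_subgroup ?H G"
        unfolding abelian_subgroup_def
      proof
        show "subgroup ?H G" using g by (intro generate_is_subgroup) auto
        show "\<forall>x\<in>?H. \<forall>y\<in>?H. x \<otimes> y = y \<otimes> x"
        proof (intro ballI)
          fix x y assume "x \<in> ?H" "y \<in> ?H"
          then obtain k l :: int where "x = g [^] k" "y = g [^] l"
            unfolding generate_pow[OF g] by blast
          then have "x \<otimes> y = g [^] (k + l)" "y \<otimes> x = g [^] (l + k)"
            using g by (simp_all add: int_pow_mult)
          then show "x \<otimes> y = y \<otimes> x" by (simp add: add.commute)
        qed
      qed
      moreover have "Gs i \<subseteq> ?H" using Gi g
        by (simp add: subgroup.one_closed generate_is_subgroup)
      ultimately have "?H = Gs i" using MA[OF that] unfolding maximal_abelian_subgroup_def by blast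
      moreover have "g \<in> ?H" using g by (simp add: generate.incl)
      ultimately show "g \<in> {\<one>}" using Gi by simp
    qed
    have "Gs k = {\<one>}" if "k < n" for k
      using one[OF that] subgroup.subset[OF sub[OF that]] \<open>carrier G \<subseteq> {\<one>}\<close> by blast
    then have "Gs 0 = Gs 1" using n3 by simp
    moreover have "(0::nat) \<in> {..<n}" "(1::nat) \<in> {..<n}" using n3 by auto
    ultimately have "(0::nat) = 1" using inj_onD[OF inj] by blast
    then show False by simp
  qed
  have cardG: "int (card (carrier G)) = 1 + (\<Sum>i<n. int (card (Gs i)) - 1)"
  proof -
    have eq: "carrier G = insert \<one> (\<Union>i<n. Gs i - {\<one>})" using cov by auto
    have "card (\<Union>i<n. Gs i - {\<one>}) = (\<Sum>i<n. card (Gs i - {\<one>}))"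
    proof (rule card_UN_disjoint)
      show "\<forall>i\<in>{..<n}. \<forall>j\<in>{..<n}. i \<noteq> j \<longrightarrow> (Gs i - {\<one>}) \<inter> (Gs j - {\<one>}) = {}"
        using disj by blast
    qed (use finG in auto)
    moreover have "card (Gs i - {\<one>}) = card (Gs i) - 1" if "i < n" for i
      using one[OF that] finG[OF that] by simp
    moreover have "int (card (Gs i) - 1) = int (card (Gs i)) - 1" if "i < n" for i
      using card2[OF that] by simp
    ultimately have "int (card (\<Union>i<n. Gs i - {\<one>})) = (\<Sum>i<n. int (card (Gs i)) - 1)"
      by simp
    moreover have "card (carrier G) = Suc (card (\<Union>i<n. Gs i - {\<one>}))"
      by (subst eq, rule card_insert_disjoint) (use finG in auto)
    ultimately show ?thesis by simp
  qed
  have dv: "int (card (Gs i)) dvd int (card (carrier G))" if "i < n" for i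
  proof -
    have "card (rcosets (Gs i)) * card (Gs i) = order G" using lagrange[OF sub[OF that]] .
    then show ?thesis unfolding order_def by (metis dvd_triv_right of_nat_dvd_iff)
  qed
  show ?thesis
    by (rule arith[where a = "\<lambda>i. int (card (Gs i))"]) (use card2 n3 cardG dv in auto)
qed

end
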